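(* Let $p\in(0,1)$, $\gamma>0$, $B>0$, $w\in\mathbb{N}$, and for each $N\in\mathbb{N}$ let $(\xi_j^{(N)*})_{j=1}^N$ be the unique maximizer of $\mathcal{T}_N$. Then for every fixed $j\in\mathbb{N}$, the sequence $(\xi_j^{(N)*})_{N\ge j}$ is strictly decreasing in $N$; that is, $\xi_j^{(N+1)*}<\xi_j^{(N)*}$ for all $N\ge j$.
   Context: Logarithms are base 2. For an admissible (nonnegative, with sum at most $B$) sequence $(x_j)_{j\ge1}$, $$\mathcal{T}_\infty(x_1,x_2,\dots)=\sum_{k=1}^{w}p^2(1-p)^{k-1}\frac{k}{2}\log_2\!\Big(1+\gamma\frac{B}{k}\Big)+\sum_{j=1}^{\infty}p(1-p)^{j+w-1}\frac12\log_2(1+\gamma x_j)+\sum_{k=1}^{\infty}p^2(1-p)^{k+w-1}\frac{w}{2}\log_2\!\Big(1+\gamma\frac{B-\sum_{j=1}^{k}x_j}{w}\Big).$$ For $N\in\mathbb{N}$ and $\xi_1,\dots,\xi_N\ge0$ with $\sum_{j=1}^N\xi_j\le B$, define $\mathcal{T}_N(\xi_1,\dots,\xi_N)=\mathcal{T}_\infty(\xi_1,\dots,\xi_N,0,0,\dots)$. $\mathcal{T}_N$ has a unique maximizer over this compact set, denoted $(\xi_j^{(N)*})_{j=1}^N$. *)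

theory Defs
  imports Complex_Main
begin

text \<open>Sequences are functions nat => real, indexed from 1 (the value at 0 is ignored).\<close>

definition Tinf :: "real \<Rightarrow> real \<Rightarrow> real \<Rightarrow> nat \<Rightarrow> (nat \<Rightarrow> real) \<Rightarrow> real" where
  "Tinf p \<gamma> B w x =
     (\<Sum>k=1..w. p\<^sup>2 * (1 - p) ^ (k - 1) * (real k / 2) * log 2 (1 + \<gamma> * (B / real k)))
   + (\<Sum>i. (\<lambda>j. p * (1 - p) ^ (j + w - 1) * (1 / 2) * log 2 (1 + \<gamma> * x j)) (Suc i))
   + (\<Sum>i. (\<lambda>k. p\<^sup>2 * (1 - p) ^ (k + w - 1) * (real w / 2)
              * log 2 (1 + \<gamma> * ((B - (\<Sum>j=1..k. x j)) / real w))) (Suc i))"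

definition TN :: "real \<Rightarrow> real \<Rightarrow> real \<Rightarrow> nat \<Rightarrow> nat \<Rightarrow> (nat \<Rightarrow> real) \<Rightarrow> real" where
  "TN p \<gamma> B w N \<xi> = Tinf p \<gamma> B w (\<lambda>j. if 1 \<le> j \<and> j \<le> N then \<xi> j else 0)"

definition feasibleN :: "real \<Rightarrow> nat \<Rightarrow> (nat \<Rightarrow> real) \<Rightarrow> bool" where
  "feasibleN B N \<xi> \<longleftrightarrow> (\<forall>j\<in>{1..N}. 0 \<le> \<xi> j) \<and> (\<Sum>j=1..N. \<xi> j) \<le> B"

definition is_maximizerN :: "real \<Rightarrow> real \<Rightarrow> real \<Rightarrow> nat \<Rightarrow> nat \<Rightarrow> (nat \<Rightarrow> real) \<Rightarrow> bool" where
  "is_maximizerN p \<gamma> B w N \<xi> \<longleftrightarrow> feasibleN B N \<xi> \<and>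
     (\<forall>\<eta>. feasibleN B N \<eta> \<longrightarrow> TN p \<gamma> B w N \<eta> \<le> TN p \<gamma> B w N \<xi>)"

end

theory Submission imports Defs begin

definition Gfun :: "real \<Rightarrow> real \<Rightarrow> real \<Rightarrow> nat \<Rightarrow> nat \<Rightarrow> (nat \<Rightarrow> real) \<Rightarrow> real" where
  "Gfun p \<gamma> B w N x =
     (\<Sum>j=1..N. p * (1 - p) ^ (j + w - 1) * (1 / 2) * log 2 (1 + \<gamma> * x j))
   + (\<Sum>k=1..N. p\<^sup>2 * (1 - p) ^ (k + w - 1) * (real w / 2)
              * log 2 (1 + \<gamma> * ((B - (\<Sum>j=1..k. x j)) / real w)))
   + p * (1 - p) ^ (N + w) * (real w / 2) * log 2 (1 + \<gamma> * ((B - (\<Sum>j=1..N. x j)) / real w))"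

lemma TN_eq:
  assumes p: "0 < p" "p < 1"
  shows "TN p \<gamma> B w N x =
     (\<Sum>k=1..w. p\<^sup>2 * (1 - p) ^ (k - 1) * (real k / 2) * log 2 (1 + \<gamma> * (B / real k)))
     + Gfun p \<gamma> B w N x"
proof -
  define y where "y = (\<lambda>j. if 1 \<le> j \<and> j \<le> N then x j else 0)"
  define f2 where "f2 = (\<lambda>i. (\<lambda>j. p * (1 - p) ^ (j + w - 1) * (1 / 2) * log 2 (1 + \<gamma> * y j)) (Suc i))"
  define f3 where "f3 = (\<lambda>i. (\<lambda>k. p\<^sup>2 * (1 - p) ^ (k + w - 1) * (real w / 2)
              * log 2 (1 + \<gamma> * ((B - (\<Sum>j=1..k. y j)) / real w))) (Suc i))"
  define L where "L = log 2 (1 + \<gamma> * ((B - (\<Sum>j=1..N. x j)) / real w))"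
  have s2: "suminf f2 = (\<Sum>j=1..N. p * (1 - p) ^ (j + w - 1) * (1 / 2) * log 2 (1 + \<gamma> * x j))"
  proof -
    have "suminf f2 = (\<Sum>i\<in>{..<N}. f2 i)"
      by (rule suminf_finite) (auto simp: f2_def y_def)
    also have "\<dots> = (\<Sum>j=Suc 0..N. p * (1 - p) ^ (j + w - 1) * (1 / 2) * log 2 (1 + \<gamma> * y j))"
      unfolding f2_def by (rule sum.atLeast1_atMost_eq[symmetric])
    also have "\<dots> = (\<Sum>j=1..N. p * (1 - p) ^ (j + w - 1) * (1 / 2) * log 2 (1 + \<gamma> * x j))"
      by (rule sum.cong) (auto simp: y_def)
    finally show ?thesis .
  qed
  have sy: "(\<Sum>j=1..k. y j) = (\<Sum>j=1..k. x j)" if "k \<le> N" for k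
    by (rule sum.cong) (use that in \<open>auto simp: y_def\<close>)
  have sy2: "(\<Sum>j=1..k. y j) = (\<Sum>j=1..N. x j)" if "N \<le> k" for k
  proof -
    have "(\<Sum>j=1..k. y j) = (\<Sum>j=1..N. y j)"
      by (rule sum.mono_neutral_right) (use that in \<open>auto simp: y_def\<close>)
    then show ?thesis using sy by simp
  qed
  have tail: "(\<lambda>n. f3 (n + N)) = (\<lambda>n. (p\<^sup>2 * (1 - p) ^ (N + w) * (real w / 2) * L) * (1 - p) ^ n)"
  proof
    fix n
    have e: "Suc (n + N) + w - 1 = n + (N + w)" by simp
    show "f3 (n + N) = (p\<^sup>2 * (1 - p) ^ (N + w) * (real w / 2) * L) * (1 - p) ^ n"
      unfolding f3_def L_def e using sy2[of "Suc (n+N)"] by (simp add: power_add)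
  qed
  have geo: "(\<lambda>n. (1 - p) ^ n) sums (1 / (1 - (1 - p)))"
    by (rule geometric_sums) (use p in auto)
  have st: "(\<lambda>n. f3 (n + N)) sums ((p\<^sup>2 * (1 - p) ^ (N + w) * (real w / 2) * L) * (1 / (1 - (1 - p))))"
    unfolding tail by (rule sums_mult[OF geo])
  have sum3: "summable f3"
    using st by (subst summable_iff_shift[symmetric, of _ N]) (auto simp: sums_iff)
  have s3: "suminf f3 = (\<Sum>k=1..N. p\<^sup>2 * (1 - p) ^ (k + w - 1) * (real w / 2)
              * log 2 (1 + \<gamma> * ((B - (\<Sum>j=1..k. x j)) / real w)))
      + p * (1 - p) ^ (N + w) * (real w / 2) * L"
  proof -
    have "suminf f3 = (\<Sum>n. f3 (n + N)) + (\<Sum>i<N. f3 i)"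
      by (rule suminf_split_initial_segment[OF sum3])
    also have "(\<Sum>n. f3 (n + N)) = p * (1 - p) ^ (N + w) * (real w / 2) * L"
      using st p by (simp add: sums_iff power2_eq_square)
    also have "(\<Sum>i<N. f3 i) = (\<Sum>k=Suc 0..N. p\<^sup>2 * (1 - p) ^ (k + w - 1) * (real w / 2)
              * log 2 (1 + \<gamma> * ((B - (\<Sum>j=1..k. y j)) / real w)))"
      unfolding f3_def by (rule sum.atLeast1_atMost_eq[symmetric])
    also have "\<dots> = (\<Sum>k=1..N. p\<^sup>2 * (1 - p) ^ (k + w - 1) * (real w / 2)
              * log 2 (1 + \<gamma> * ((B - (\<Sum>j=1..k. x j)) / real w)))"
    proof (rule sum.cong)
      fix k assume "k \<in> {1..N}"
      then show "p\<^sup>2 * (1 - p) ^ (k + w - 1) * (real w / 2)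
              * log 2 (1 + \<gamma> * ((B - (\<Sum>j=1..k. y j)) / real w)) = p\<^sup>2 * (1 - p) ^ (k + w - 1) * (real w / 2)
              * log 2 (1 + \<gamma> * ((B - (\<Sum>j=1..k. x j)) / real w))" using sy[of k] by simp
    qed simp
    finally show ?thesis by simp
  qed
  show ?thesis
    unfolding TN_def Tinf_def Gfun_def
    using s2 s3 unfolding f2_def f3_def y_def L_def by simp
qed

lemma dlog:
  assumes "\<beta> \<noteq> 0 \<Longrightarrow> 0 < \<alpha>"
  shows "((\<lambda>t. c * log 2 (\<alpha> + \<beta> * t)) has_real_derivative (c * \<beta> / (ln 2 * \<alpha>))) (at 0)"
proof (cases "\<beta> = 0")
  case True
  then show ?thesis by simp
next
  case False
  then have a: "0 < \<alpha>" using assms by simp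
  show ?thesis
    by (rule derivative_eq_intros refl | use a in simp)+
qed

lemma sum_upd:
  fixes x :: "nat \<Rightarrow> real"
  assumes "1 \<le> j"
  shows "(\<Sum>i=1..k. (x(j := x j + t)) i) = (\<Sum>i=1..k. x i) + (if j \<le> k then t else 0)"
proof -
  have "(\<Sum>i=1..k. (x(j := x j + t)) i) = (\<Sum>i=1..k. x i + (if i = j then t else 0))"
    by (rule sum.cong) auto
  also have "\<dots> = (\<Sum>i=1..k. x i) + (\<Sum>i=1..k. (if i = j then t else 0))"
    by (rule sum.distrib)
  also have "(\<Sum>i=1..k. (if i = j then t else 0)) = (if j \<le> k then t else 0)"
    using assms by (subst sum.delta) auto
  finally show ?thesis .
qed

definition Kc :: "real \<Rightarrow> real \<Rightarrow> nat \<Rightarrow> real" where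
  "Kc p \<gamma> w = p * (1 - p) ^ (w - 1) * \<gamma> / (2 * ln 2)"
definition uu :: "real \<Rightarrow> (nat \<Rightarrow> real) \<Rightarrow> nat \<Rightarrow> real" where
  "uu \<gamma> x j = 1 / (1 + \<gamma> * x j)"
definition vv :: "real \<Rightarrow> real \<Rightarrow> nat \<Rightarrow> (nat \<Rightarrow> real) \<Rightarrow> nat \<Rightarrow> real" where
  "vv \<gamma> B w x k = 1 / (1 + \<gamma> * ((B - (\<Sum>i=1..k. x i)) / real w))"
definition Ej :: "real \<Rightarrow> real \<Rightarrow> real \<Rightarrow> nat \<Rightarrow> nat \<Rightarrow> (nat \<Rightarrow> real) \<Rightarrow> nat \<Rightarrow> real" where
  "Ej p \<gamma> B w N x j = (1 - p) ^ j * uu \<gamma> x j - (\<Sum>k=j..N. p * (1 - p) ^ k * vv \<gamma> B w x k)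
      - (1 - p) ^ (N + 1) * vv \<gamma> B w x N"

lemma Gfun_deriv:
  assumes j: "1 \<le> j" "j \<le> N" and w: "1 \<le> w" and g: "0 < \<gamma>"
    and xj: "0 < 1 + \<gamma> * x j"
    and Rk: "\<forall>k\<in>{j..N}. 0 < 1 + \<gamma> * ((B - (\<Sum>i=1..k. x i)) / real w)"
  shows "((\<lambda>t. Gfun p \<gamma> B w N (x(j := x j + t))) has_real_derivative (Kc p \<gamma> w * Ej p \<gamma> B w N x j)) (at 0)"
proof -
  define A where "A = (\<lambda>k. 1 + \<gamma> * ((B - (\<Sum>i=1..k. x i)) / real w))"
  define be where "be = (\<lambda>k. if j \<le> k then - \<gamma> / real w else 0)"
  have eq1: "\<And>t i. 1 + \<gamma> * (x(j := x j + t)) i = (1 + \<gamma> * x i) + (if i = j then \<gamma> else 0) * t"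
    by (auto simp: algebra_simps)
  have eq2: "\<And>t k. 1 + \<gamma> * ((B - (\<Sum>i=1..k. (x(j := x j + t)) i)) / real w) = A k + be k * t"
    unfolding A_def be_def sum_upd[OF j(1)] using w by (auto simp: field_simps)
  have G: "(\<lambda>t. Gfun p \<gamma> B w N (x(j := x j + t))) = (\<lambda>t.
     (\<Sum>i=1..N. p * (1 - p) ^ (i + w - 1) * (1 / 2) * log 2 ((1 + \<gamma> * x i) + (if i = j then \<gamma> else 0) * t))
   + (\<Sum>k=1..N. p\<^sup>2 * (1 - p) ^ (k + w - 1) * (real w / 2) * log 2 (A k + be k * t))
   + p * (1 - p) ^ (N + w) * (real w / 2) * log 2 (A N + be N * t))"
    unfolding Gfun_def eq1 eq2 by simp
  have d1: "((\<lambda>t. (\<Sum>i=1..N. p * (1 - p) ^ (i + w - 1) * (1 / 2) * log 2 ((1 + \<gamma> * x i) + (if i = j then \<gamma> else 0) * t)))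
     has_real_derivative (\<Sum>i=1..N. p * (1 - p) ^ (i + w - 1) * (1 / 2) * (if i = j then \<gamma> else 0) / (ln 2 * (1 + \<gamma> * x i)))) (at 0)"
    by (rule DERIV_sum, rule dlog) (use xj in \<open>auto split: if_splits\<close>)
  have d2: "((\<lambda>t. (\<Sum>k=1..N. p\<^sup>2 * (1 - p) ^ (k + w - 1) * (real w / 2) * log 2 (A k + be k * t)))
     has_real_derivative (\<Sum>k=1..N. p\<^sup>2 * (1 - p) ^ (k + w - 1) * (real w / 2) * be k / (ln 2 * A k))) (at 0)"
    by (rule DERIV_sum, rule dlog) (use Rk in \<open>auto simp: be_def A_def split: if_splits\<close>)
  have d3: "((\<lambda>t. p * (1 - p) ^ (N + w) * (real w / 2) * log 2 (A N + be N * t))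
     has_real_derivative (p * (1 - p) ^ (N + w) * (real w / 2) * be N / (ln 2 * A N))) (at 0)"
    by (rule dlog) (use Rk j in \<open>auto simp: A_def\<close>)
  have D: "((\<lambda>t. Gfun p \<gamma> B w N (x(j := x j + t))) has_real_derivative
     (\<Sum>i=1..N. p * (1 - p) ^ (i + w - 1) * (1 / 2) * (if i = j then \<gamma> else 0) / (ln 2 * (1 + \<gamma> * x i)))
   + (\<Sum>k=1..N. p\<^sup>2 * (1 - p) ^ (k + w - 1) * (real w / 2) * be k / (ln 2 * A k))
   + (p * (1 - p) ^ (N + w) * (real w / 2) * be N / (ln 2 * A N))) (at 0)"
    unfolding G by (intro DERIV_add d1 d2 d3)
  show ?thesis
  proof (rule DERIV_cong[OF D])
    have pw: "(1 - p) ^ (k + w - 1) = (1 - p) ^ (w - 1) * (1 - p) ^ k" for k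
    proof -
      have e: "k + w - 1 = (w - 1) + k" using w by simp
      show ?thesis by (subst e, rule power_add)
    qed
    have pw2: "(1 - p) ^ (N + w) = (1 - p) ^ (w - 1) * (1 - p) ^ (N + 1)"
    proof -
      have e: "N + w = (w - 1) + (N + 1)" using w by simp
      show ?thesis by (subst e, rule power_add)
    qed
    have wpos: "real w > 0" using w by simp
    have T1: "(\<Sum>i=1..N. p * (1 - p) ^ (i + w - 1) * (1 / 2) * (if i = j then \<gamma> else 0) / (ln 2 * (1 + \<gamma> * x i)))
       = Kc p \<gamma> w * ((1 - p) ^ j * uu \<gamma> x j)"
    proof -
      have "(\<Sum>i=1..N. p * (1 - p) ^ (i + w - 1) * (1 / 2) * (if i = j then \<gamma> else 0) / (ln 2 * (1 + \<gamma> * x i)))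
        = (\<Sum>i\<in>{1..N}. if i = j then p * (1 - p) ^ (i + w - 1) * (1 / 2) * \<gamma> / (ln 2 * (1 + \<gamma> * x i)) else 0)"
        by (rule sum.cong) auto
      also have "\<dots> = p * (1 - p) ^ (j + w - 1) * (1 / 2) * \<gamma> / (ln 2 * (1 + \<gamma> * x j))"
        using j by (subst sum.delta) auto
      also have "\<dots> = Kc p \<gamma> w * ((1 - p) ^ j * uu \<gamma> x j)"
        unfolding Kc_def uu_def pw by (simp add: field_simps)
      finally show ?thesis .
    qed
    have T2: "(\<Sum>k=1..N. p\<^sup>2 * (1 - p) ^ (k + w - 1) * (real w / 2) * be k / (ln 2 * A k))
       = - (Kc p \<gamma> w * (\<Sum>k=j..N. p * (1 - p) ^ k * vv \<gamma> B w x k))"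
    proof -
      have "(\<Sum>k=1..N. p\<^sup>2 * (1 - p) ^ (k + w - 1) * (real w / 2) * be k / (ln 2 * A k))
        = (\<Sum>k\<in>{1..N}. if j \<le> k then - (Kc p \<gamma> w * (p * (1 - p) ^ k * vv \<gamma> B w x k)) else 0)"
      proof (rule sum.cong)
        fix k assume "k \<in> {1..N}"
        show "p\<^sup>2 * (1 - p) ^ (k + w - 1) * (real w / 2) * be k / (ln 2 * A k)
          = (if j \<le> k then - (Kc p \<gamma> w * (p * (1 - p) ^ k * vv \<gamma> B w x k)) else 0)"
          unfolding be_def Kc_def vv_def A_def pw using wpos by (auto simp: field_simps power2_eq_square)
      qed simp
      also have "\<dots> = (\<Sum>k\<in>{k\<in>{1..N}. j \<le> k}. - (Kc p \<gamma> w * (p * (1 - p) ^ k * vv \<gamma> B w x k)))"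
        by (rule sum.inter_filter[symmetric]) simp
      also have "{k\<in>{1..N}. j \<le> k} = {j..N}" using j by auto
      finally show ?thesis by (simp add: sum_distrib_left sum_negf)
    qed
    have T3: "p * (1 - p) ^ (N + w) * (real w / 2) * be N / (ln 2 * A N) = - (Kc p \<gamma> w * ((1 - p) ^ (N + 1) * vv \<gamma> B w x N))"
    proof -
      have AN: "A N \<noteq> 0" using Rk j unfolding A_def by force
      have "p * (1 - p) ^ (N + w) * (real w / 2) * be N / (ln 2 * A N) = - (Kc p \<gamma> w * ((1 - p) ^ (N + 1) * (1 / A N)))"
        unfolding be_def Kc_def pw2 using wpos j AN by (auto simp: field_simps)
      then show ?thesis unfolding vv_def A_def by simp
    qed
    show "(\<Sum>i=1..N. p * (1 - p) ^ (i + w - 1) * (1 / 2) * (if i = j then \<gamma> else 0) / (ln 2 * (1 + \<gamma> * x i)))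
   + (\<Sum>k=1..N. p\<^sup>2 * (1 - p) ^ (k + w - 1) * (real w / 2) * be k / (ln 2 * A k))
   + (p * (1 - p) ^ (N + w) * (real w / 2) * be N / (ln 2 * A N)) = Kc p \<gamma> w * Ej p \<gamma> B w N x j"
      unfolding T1 T2 T3 Ej_def by (simp add: algebra_simps)
  qed
qed

lemma tele:
  fixes p :: real
  shows "j \<le> Suc N \<Longrightarrow> (\<Sum>k=j..N. p * (1 - p) ^ k) + (1 - p) ^ (N + 1) = (1 - p) ^ j"
proof (induction N arbitrary: j)
  case 0
  then show ?case by (cases j) (auto simp: algebra_simps)
next
  case (Suc N)
  show ?case
  proof (cases "j = Suc (Suc N)")
    case True
    then show ?thesis by simp
  next
    case False
    then have "j \<le> Suc N" using Suc.prems by simp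
    then have "(\<Sum>k=j..Suc N. p * (1 - p) ^ k) = (\<Sum>k=j..N. p * (1 - p) ^ k) + p * (1 - p) ^ Suc N"
      by (simp add: sum.cl_ivl_Suc)
    then show ?thesis using Suc.IH[OF \<open>j \<le> Suc N\<close>] by (simp add: algebra_simps)
  qed
qed

lemma Rk_nonneg:
  assumes "feasibleN B N x" "k \<le> N"
  shows "0 \<le> B - (\<Sum>i=1..k. x i)"
proof -
  have "(\<Sum>i=1..k. x i) \<le> (\<Sum>i=1..N. x i)"
    by (rule sum_mono2) (use assms in \<open>auto simp: feasibleN_def\<close>)
  then show ?thesis using assms by (auto simp: feasibleN_def)
qed

lemma feas_upd:
  fixes x :: "nat \<Rightarrow> real"
  assumes "feasibleN B N x" "1 \<le> j" "j \<le> N" "0 \<le> x j + t" "(\<Sum>i=1..N. x i) + t \<le> B"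
  shows "feasibleN B N (x(j := x j + t))"
  using assms unfolding feasibleN_def sum_upd[OF assms(2)] by auto

lemma max_G:
  assumes p: "0 < p" "p < 1" and m: "is_maximizerN p \<gamma> B w N x" and f: "feasibleN B N y"
  shows "Gfun p \<gamma> B w N y \<le> Gfun p \<gamma> B w N x"
  using m f unfolding is_maximizerN_def TN_eq[OF p] by auto

lemma Kc_pos: "0 < p \<Longrightarrow> p < 1 \<Longrightarrow> 0 < \<gamma> \<Longrightarrow> 0 < Kc p \<gamma> w"
  unfolding Kc_def by simp

lemma deriv_at:
  assumes p: "0 < p" "p < 1" and g: "0 < \<gamma>" and w: "1 \<le> w"
    and m: "is_maximizerN p \<gamma> B w N x" and j: "1 \<le> j" "j \<le> N"
  shows "((\<lambda>t. Gfun p \<gamma> B w N (x(j := x j + t))) has_real_derivative (Kc p \<gamma> w * Ej p \<gamma> B w N x j)) (at 0)"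
proof (rule Gfun_deriv[OF j w g])
  have f: "feasibleN B N x" using m by (simp add: is_maximizerN_def)
  then have "0 \<le> x j" using j by (auto simp: feasibleN_def)
  then show "0 < 1 + \<gamma> * x j" using g by (simp add: add_pos_nonneg)
  show "\<forall>k\<in>{j..N}. 0 < 1 + \<gamma> * ((B - (\<Sum>i=1..k. x i)) / real w)"
    using Rk_nonneg[OF f] g w by (auto intro!: add_pos_nonneg)
qed

lemma opt_dec:
  assumes p: "0 < p" "p < 1" and g: "0 < \<gamma>" and w: "1 \<le> w"
    and m: "is_maximizerN p \<gamma> B w N x" and j: "1 \<le> j" "j \<le> N" and xj: "0 < x j"
  shows "0 \<le> Ej p \<gamma> B w N x j"
proof (rule ccontr)
  assume "\<not> 0 \<le> Ej p \<gamma> B w N x j"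
  then have "Kc p \<gamma> w * Ej p \<gamma> B w N x j < 0"
    using Kc_pos[OF p g] by (simp add: mult_pos_neg)
  from DERIV_neg_dec_left[OF deriv_at[OF p g w m j] this]
  obtain d where d: "d > 0" "\<forall>h>0. h < d \<longrightarrow> Gfun p \<gamma> B w N (x(j := x j + 0)) < Gfun p \<gamma> B w N (x(j := x j + (0 - h)))"
    by blast
  define h where "h = min d (x j) / 2"
  have h: "0 < h" "h < d" "h \<le> x j" using d xj by (auto simp: h_def)
  have f: "feasibleN B N x" using m by (simp add: is_maximizerN_def)
  have "feasibleN B N (x(j := x j + (0 - h)))"
    by (rule feas_upd[OF f j]) (use h f in \<open>auto simp: feasibleN_def\<close>)
  from max_G[OF p m this] d h show False by auto
qed

lemma opt_inc:
  assumes p: "0 < p" "p < 1" and g: "0 < \<gamma>" and w: "1 \<le> w"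
    and m: "is_maximizerN p \<gamma> B w N x" and j: "1 \<le> j" "j \<le> N" and R: "0 < B - (\<Sum>i=1..N. x i)"
  shows "Ej p \<gamma> B w N x j \<le> 0"
proof (rule ccontr)
  assume "\<not> Ej p \<gamma> B w N x j \<le> 0"
  then have "0 < Kc p \<gamma> w * Ej p \<gamma> B w N x j"
    using Kc_pos[OF p g] by simp
  from DERIV_pos_inc_right[OF deriv_at[OF p g w m j] this]
  obtain d where d: "d > 0" "\<forall>h>0. h < d \<longrightarrow> Gfun p \<gamma> B w N (x(j := x j + 0)) < Gfun p \<gamma> B w N (x(j := x j + (0 + h)))"
    by blast
  define h where "h = min d (B - (\<Sum>i=1..N. x i)) / 2"
  have h: "0 < h" "h < d" "h \<le> B - (\<Sum>i=1..N. x i)" using d R by (auto simp: h_def)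
  have f: "feasibleN B N x" using m by (simp add: is_maximizerN_def)
  have "feasibleN B N (x(j := x j + (0 + h)))"
    by (rule feas_upd[OF f j]) (use h f j in \<open>auto simp: feasibleN_def\<close>)
  from max_G[OF p m this] d h show False by auto
qed

lemma RN_pos:
  assumes p: "0 < p" "p < 1" and g: "0 < \<gamma>" and w: "1 \<le> w" and B: "0 < B"
    and m: "is_maximizerN p \<gamma> B w N x"
  shows "0 < B - (\<Sum>i=1..N. x i)"
proof (rule ccontr)
  assume a: "\<not> 0 < B - (\<Sum>i=1..N. x i)"
  have f: "feasibleN B N x" using m by (simp add: is_maximizerN_def)
  have SB: "(\<Sum>i=1..N. x i) = B" using a f by (auto simp: feasibleN_def)
  define M where "M = {i\<in>{1..N}. 0 < x i}"
  have finM: "finite M" by (simp add: M_def)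
  have neM: "M \<noteq> {}"
  proof
    assume "M = {}"
    then have "\<forall>i\<in>{1..N}. x i = 0" using f by (force simp: M_def feasibleN_def)
    then have "(\<Sum>i=1..N. x i) = 0" by simp
    then show False using SB B by simp
  qed
  define i where "i = Max M"
  have iM: "i \<in> M" using finM neM by (simp add: i_def)
  then have i: "1 \<le> i" "i \<le> N" "0 < x i" by (auto simp: M_def)
  have zero: "x l = 0" if "i < l" "l \<le> N" for l
  proof -
    have "l \<notin> M" using that Max_ge[OF finM] i_def by force
    moreover have l1: "l \<in> {1..N}" using that i by auto
    moreover have "0 \<le> x l" using f l1 by (auto simp: feasibleN_def)
    ultimately show ?thesis by (auto simp: M_def)
  qed
  have vk: "vv \<gamma> B w x k = 1" if "k \<in> {i..N}" for k
  proof -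
    have "(\<Sum>l=1..k. x l) = (\<Sum>l=1..N. x l)"
      by (rule sum.mono_neutral_left) (use that zero in auto)
    then show ?thesis unfolding vv_def using SB by simp
  qed
  have ui: "uu \<gamma> x i < 1"
  proof -
    have "0 < \<gamma> * x i" using g i by simp
    then show ?thesis unfolding uu_def by simp
  qed
  have "Ej p \<gamma> B w N x i = (1 - p) ^ i * uu \<gamma> x i - ((\<Sum>k=i..N. p * (1 - p) ^ k) + (1 - p) ^ (N + 1))"
    unfolding Ej_def using vk i by simp
  also have "\<dots> = (1 - p) ^ i * (uu \<gamma> x i - 1)"
    using tele[of i N p] i by (simp add: algebra_simps)
  also have "\<dots> < 0" using ui p by (simp add: mult_pos_neg)
  finally show False using opt_dec[OF p g w m i] by simp
qed

lemma x_pos: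
  assumes p: "0 < p" "p < 1" and g: "0 < \<gamma>" and w: "1 \<le> w" and B: "0 < B"
    and m: "is_maximizerN p \<gamma> B w N x" and j: "1 \<le> j" "j \<le> N"
  shows "0 < x j"
proof (rule ccontr)
  assume a: "\<not> 0 < x j"
  have f: "feasibleN B N x" using m by (simp add: is_maximizerN_def)
  have xj: "x j = 0" using a f j by (force simp: feasibleN_def)
  have R: "0 < B - (\<Sum>i=1..N. x i)" by (rule RN_pos[OF p g w B m])
  have vle: "vv \<gamma> B w x k \<le> 1" if "k \<le> N" for k
  proof -
    have "0 \<le> \<gamma> * ((B - (\<Sum>i=1..k. x i)) / real w)"
      using Rk_nonneg[OF f that] g by simp
    then show ?thesis unfolding vv_def by simp
  qed
  have vN: "vv \<gamma> B w x N < 1"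
  proof -
    have "0 < \<gamma> * ((B - (\<Sum>i=1..N. x i)) / real w)" using R g w by simp
    then show ?thesis unfolding vv_def by simp
  qed
  have "(\<Sum>k=j..N. p * (1 - p) ^ k * vv \<gamma> B w x k) \<le> (\<Sum>k=j..N. p * (1 - p) ^ k)"
    by (rule sum_mono) (use p vle in \<open>auto intro!: mult_left_le\<close>)
  moreover have "(1 - p) ^ (N + 1) * vv \<gamma> B w x N < (1 - p) ^ (N + 1)"
    using vN p by simp
  ultimately have "0 < Ej p \<gamma> B w N x j"
    unfolding Ej_def uu_def xj using tele[of j N p] j by simp
  then show False using opt_inc[OF p g w m j R] by simp
qed

lemma kkt:
  assumes p: "0 < p" "p < 1" and g: "0 < \<gamma>" and w: "1 \<le> w" and B: "0 < B"
    and m: "is_maximizerN p \<gamma> B w N x" and N: "1 \<le> N"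
  shows "uu \<gamma> x N = vv \<gamma> B w x N"
    and "\<And>j. 1 \<le> j \<Longrightarrow> j < N \<Longrightarrow> uu \<gamma> x j = p * vv \<gamma> B w x j + (1 - p) * uu \<gamma> x (Suc j)"
proof -
  have R: "0 < B - (\<Sum>i=1..N. x i)" by (rule RN_pos[OF p g w B m])
  have E0: "Ej p \<gamma> B w N x j = 0" if "1 \<le> j" "j \<le> N" for j
    using opt_inc[OF p g w m that R] opt_dec[OF p g w m that x_pos[OF p g w B m that]] by simp
  have q: "(1 - p) ^ N \<noteq> 0" using p by simp
  have "Ej p \<gamma> B w N x N = (1 - p) ^ N * (uu \<gamma> x N - vv \<gamma> B w x N)"
    unfolding Ej_def by (simp add: algebra_simps)
  then have "(1 - p) ^ N * (uu \<gamma> x N - vv \<gamma> B w x N) = 0"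
    using E0[OF N order.refl] by simp
  with q p have "uu \<gamma> x N - vv \<gamma> B w x N = 0" by simp
  then show "uu \<gamma> x N = vv \<gamma> B w x N" by simp
  fix j assume j: "1 \<le> j" "j < N"
  have "(\<Sum>k=j..N. p * (1 - p) ^ k * vv \<gamma> B w x k) = p * (1 - p) ^ j * vv \<gamma> B w x j + (\<Sum>k=Suc j..N. p * (1 - p) ^ k * vv \<gamma> B w x k)"
    using j by (simp add: sum.atLeast_Suc_atMost)
  then have "(1 - p) ^ j * (uu \<gamma> x j - p * vv \<gamma> B w x j - (1 - p) * uu \<gamma> x (Suc j)) = 0"
    using E0[of j] E0[of "Suc j"] j unfolding Ej_def by (simp add: algebra_simps)
  then show "uu \<gamma> x j = p * vv \<gamma> B w x j + (1 - p) * uu \<gamma> x (Suc j)" using p by simp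
qed

lemma ff_le:
  fixes \<gamma> a b :: real
  assumes "0 < \<gamma>" "0 \<le> a" "0 \<le> b"
  shows "1 / (1 + \<gamma> * a) \<le> 1 / (1 + \<gamma> * b) \<longleftrightarrow> b \<le> a"
proof -
  have ab: "0 < 1 + \<gamma> * a" "0 < 1 + \<gamma> * b" using assms by (auto intro: add_pos_nonneg)
  have "0 < (1 + \<gamma> * a) * (1 + \<gamma> * b)" using ab by simp
  with ab have "1 / (1 + \<gamma> * a) \<le> 1 / (1 + \<gamma> * b) \<longleftrightarrow> 1 + \<gamma> * b \<le> 1 + \<gamma> * a"
    using inverse_le_iff_le[OF ab] by (simp add: inverse_eq_divide)
  also have "\<dots> \<longleftrightarrow> b \<le> a" using assms by simp
  finally show ?thesis .
qed

lemma ff_less: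
  fixes \<gamma> a b :: real
  assumes "0 < \<gamma>" "0 \<le> a" "0 \<le> b"
  shows "1 / (1 + \<gamma> * a) < 1 / (1 + \<gamma> * b) \<longleftrightarrow> b < a"
  using ff_le[OF assms] ff_le[OF assms(1,3,2)] by (auto simp: less_le_not_le)

definition RR :: "real \<Rightarrow> (nat \<Rightarrow> real) \<Rightarrow> nat \<Rightarrow> real" where
  "RR B z k = B - (\<Sum>i=1..k. z i)"

lemma vv_RR: "vv \<gamma> B w z k = 1 / (1 + \<gamma> * (RR B z k / real w))"
  unfolding vv_def RR_def by simp

lemma RR_Suc: "RR B z (Suc k) = RR B z k - z (Suc k)"
  unfolding RR_def by (simp add: sum.cl_ivl_Suc)

lemma RR_1: "RR B z 1 = B - z 1"
  unfolding RR_def by simp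

lemma step_cmp:
  fixes x y :: "nat \<Rightarrow> real"
  assumes p: "0 < p" "p < 1" and g: "0 < \<gamma>" and w: "1 \<le> w"
    and kx: "uu \<gamma> x j = p * vv \<gamma> B w x j + (1 - p) * uu \<gamma> x (Suc j)"
    and ky: "uu \<gamma> y j = p * vv \<gamma> B w y j + (1 - p) * uu \<gamma> y (Suc j)"
    and nn: "0 \<le> x j" "0 \<le> y j" "0 \<le> x (Suc j)" "0 \<le> y (Suc j)"
       "0 \<le> RR B x j" "0 \<le> RR B y j"
  shows "x j \<le> y j \<Longrightarrow> RR B y j \<le> RR B x j \<Longrightarrow> x (Suc j) \<le> y (Suc j)"
    and "x j > y j \<Longrightarrow> RR B y j > RR B x j \<Longrightarrow> x (Suc j) > y (Suc j)"
proof -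
  have wp: "0 < real w" using w by simp
  have nw: "0 \<le> RR B x j / real w" "0 \<le> RR B y j / real w" using nn wp by auto
  have q: "0 < 1 - p" using p by simp
  {
    assume a: "x j \<le> y j" "RR B y j \<le> RR B x j"
    have "uu \<gamma> y j \<le> uu \<gamma> x j" unfolding uu_def using ff_le[OF g nn(2,1)] a by simp
    moreover have "vv \<gamma> B w x j \<le> vv \<gamma> B w y j" unfolding vv_RR using ff_le[OF g nw] a wp
      by (simp add: divide_right_mono)
    ultimately have "(1 - p) * uu \<gamma> y (Suc j) \<le> (1 - p) * uu \<gamma> x (Suc j)"
      using kx ky p by (smt (verit) mult_left_mono)
    then have "uu \<gamma> y (Suc j) \<le> uu \<gamma> x (Suc j)" using q by simp
    then show "x (Suc j) \<le> y (Suc j)" unfolding uu_def using ff_le[OF g nn(4,3)] by simp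
  }
  {
    assume a: "x j > y j" "RR B y j > RR B x j"
    have "uu \<gamma> y j > uu \<gamma> x j" unfolding uu_def using ff_less[OF g nn(1,2)] a by simp
    moreover have "vv \<gamma> B w x j > vv \<gamma> B w y j" unfolding vv_RR using ff_less[OF g nw(2,1)] a wp
      by (simp add: divide_strict_right_mono)
    ultimately have "(1 - p) * uu \<gamma> y (Suc j) > (1 - p) * uu \<gamma> x (Suc j)"
      using kx ky p by (smt (verit) mult_left_mono)
    then have "uu \<gamma> y (Suc j) > uu \<gamma> x (Suc j)" using q by simp
    then show "x (Suc j) > y (Suc j)" unfolding uu_def using ff_less[OF g nn(3,4)] by simp
  }
qed

theorem lemma7:
  fixes p \<gamma> B :: real and w :: nat and \<xi> :: "nat \<Rightarrow> nat \<Rightarrow> real"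
  assumes "0 < p" and "p < 1" and "0 < \<gamma>" and "0 < B" and "1 \<le> w"
    and "\<And>N. 1 \<le> N \<Longrightarrow> is_maximizerN p \<gamma> B w N (\<xi> N)"
  shows "\<forall>j N. 1 \<le> j \<and> j \<le> N \<longrightarrow> \<xi> (N + 1) j < \<xi> N j"
proof (intro allI impI)
  fix j N :: nat
  assume jN: "1 \<le> j \<and> j \<le> N"
  have p: "0 < p" "p < 1" and g: "0 < \<gamma>" and B: "0 < B" and w: "1 \<le> w" using assms by auto
  have N: "1 \<le> N" using jN by simp
  define x where "x = \<xi> N"
  define y where "y = \<xi> (Suc N)"
  have mx: "is_maximizerN p \<gamma> B w N x" using assms(6)[OF N] by (simp add: x_def)
  have my: "is_maximizerN p \<gamma> B w (Suc N) y" using assms(6)[of "Suc N"] by (simp add: y_def)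
  have fx: "feasibleN B N x" using mx by (simp add: is_maximizerN_def)
  have fy: "feasibleN B (Suc N) y" using my by (simp add: is_maximizerN_def)
  have xpos: "0 < x k" if "1 \<le> k" "k \<le> N" for k using x_pos[OF p g w B mx that] .
  have ypos: "0 < y k" if "1 \<le> k" "k \<le> Suc N" for k using x_pos[OF p g w B my that] .
  have Rx: "0 \<le> RR B x k" if "k \<le> N" for k using Rk_nonneg[OF fx that] by (simp add: RR_def)
  have Ry: "0 \<le> RR B y k" if "k \<le> Suc N" for k using Rk_nonneg[OF fy that] by (simp add: RR_def)
  have kx: "uu \<gamma> x k = p * vv \<gamma> B w x k + (1 - p) * uu \<gamma> x (Suc k)" if "1 \<le> k" "k < N" for k
    using kkt(2)[OF p g w B mx N that] .
  have ky: "uu \<gamma> y k = p * vv \<gamma> B w y k + (1 - p) * uu \<gamma> y (Suc k)" if "1 \<le> k" "k < Suc N" for k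
    using kkt(2)[OF p g w B my _ that] by simp
  have kxN: "uu \<gamma> x N = vv \<gamma> B w x N" using kkt(1)[OF p g w B mx N] .
  have kyN: "uu \<gamma> y (Suc N) = vv \<gamma> B w y (Suc N)" using kkt(1)[OF p g w B my] by simp
  have wp: "0 < real w" using w by simp
  have first: "y 1 < x 1"
  proof (rule ccontr)
    assume "\<not> y 1 < x 1"
    then have a1: "x 1 \<le> y 1" by simp
    have P: "x k \<le> y k \<and> RR B y k \<le> RR B x k" if "1 \<le> k" "k \<le> N" for k
      using that
    proof (induction k)
      case 0
      then show ?case by simp
    next
      case (Suc k)
      show ?case
      proof (cases "k = 0")
        case True
        then show ?thesis using a1 by (simp add: RR_def)
      next
        case False
        then have k: "1 \<le> k" "k < N" using Suc.prems by auto
        have IH: "x k \<le> y k" "RR B y k \<le> RR B x k" using Suc.IH k by auto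
        have "x (Suc k) \<le> y (Suc k)"
        proof -
        have kyk: "uu \<gamma> y k = p * vv \<gamma> B w y k + (1 - p) * uu \<gamma> y (Suc k)" using ky k by simp
        have nn: "0 \<le> x k" "0 \<le> y k" "0 \<le> x (Suc k)" "0 \<le> y (Suc k)" "0 \<le> RR B x k" "0 \<le> RR B y k"
          using k xpos[of k] ypos[of k] xpos[of "Suc k"] ypos[of "Suc k"] Rx[of k] Ry[of k] by auto
        show ?thesis by (rule step_cmp(1)[OF p g w kx[OF k] kyk nn IH])
      qed
        then show ?thesis using IH by (simp add: RR_Suc)
      qed
    qed
    have PN: "x N \<le> y N" "RR B y N \<le> RR B x N" using P[OF N order.refl] by auto
    have nwx: "0 \<le> RR B x N / real w" "0 \<le> RR B y N / real w" using Rx Ry wp by auto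
    have "uu \<gamma> y N \<le> uu \<gamma> x N" unfolding uu_def
      using ff_le[OF g less_imp_le[OF ypos[of N]] less_imp_le[OF xpos[OF N order.refl]]] PN N by simp
    moreover have "vv \<gamma> B w x N \<le> vv \<gamma> B w y N" unfolding vv_RR using ff_le[OF g nwx] PN wp
      by (simp add: divide_right_mono)
    moreover have "uu \<gamma> y N = p * vv \<gamma> B w y N + (1 - p) * uu \<gamma> y (Suc N)" using ky[of N] N by simp
    ultimately have "(1 - p) * uu \<gamma> y (Suc N) \<le> (1 - p) * vv \<gamma> B w x N"
    proof -
      assume h: "uu \<gamma> y N \<le> uu \<gamma> x N" "vv \<gamma> B w x N \<le> vv \<gamma> B w y N"
        "uu \<gamma> y N = p * vv \<gamma> B w y N + (1 - p) * uu \<gamma> y (Suc N)"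
      have "p * vv \<gamma> B w x N \<le> p * vv \<gamma> B w y N" using h(2) p(1) by (simp add: mult_left_mono)
      then show ?thesis using h kxN by (simp add: algebra_simps)
    qed
    then have le: "uu \<gamma> y (Suc N) \<le> vv \<gamma> B w x N" using p by simp
    have "RR B y (Suc N) < RR B x N" using RR_Suc[of B y N] ypos[of "Suc N"] PN by simp
    then have "vv \<gamma> B w x N < vv \<gamma> B w y (Suc N)" unfolding vv_RR
      using ff_less[OF g, of "RR B x N / real w" "RR B y (Suc N) / real w"] Rx[of N] Ry[of "Suc N"] wp
      by (simp add: divide_strict_right_mono)
    then show False using le kyN by simp
  qed
  have P2: "y k < x k \<and> RR B x k < RR B y k" if "1 \<le> k" "k \<le> N" for k
    using that
  proof (induction k)
    case 0
    then show ?case by simp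
  next
    case (Suc k)
    show ?case
    proof (cases "k = 0")
      case True
      then show ?thesis using first by (simp add: RR_def)
    next
      case False
      then have k: "1 \<le> k" "k < N" using Suc.prems by auto
      have IH: "y k < x k" "RR B x k < RR B y k" using Suc.IH k by auto
      have "y (Suc k) < x (Suc k)"
      proof -
        have kyk: "uu \<gamma> y k = p * vv \<gamma> B w y k + (1 - p) * uu \<gamma> y (Suc k)" using ky k by simp
        have nn: "0 \<le> x k" "0 \<le> y k" "0 \<le> x (Suc k)" "0 \<le> y (Suc k)" "0 \<le> RR B x k" "0 \<le> RR B y k"
          using k xpos[of k] ypos[of k] xpos[of "Suc k"] ypos[of "Suc k"] Rx[of k] Ry[of k] by auto
        show ?thesis by (rule step_cmp(2)[OF p g w kx[OF k] kyk nn IH])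
      qed
      then show ?thesis using IH by (simp add: RR_Suc)
    qed
  qed
  show "\<xi> (N + 1) j < \<xi> N j" using P2[of j] jN by (simp add: x_def y_def)
qed

end
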